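(* Let $p$ be a prime, $\alpha\ge1$ and $\beta\ge0$. For every $p^\alpha$-periodic function $f:\mathbb{Z}\to\mathbb{Z}$ (equivalently $f:\mathbb{Z}_{p^\alpha}\to\mathbb{Z}$), $$p^\beta\ \text{ divides }\ \Delta^{(\beta(p-1)+1)p^{\alpha-1}}f(x)\quad\text{for all }x.$$
   Context: For a function $f$ on $\mathbb{Z}$ (or on $\mathbb{Z}_q$, viewed as a $q$-periodic function on $\mathbb{Z}$) with values in an additive group, the difference operator is $\Delta f(x):=f(x+1)-f(x)$, and $\Delta^k$ is its $k$-fold iterate. *)

theory Defs
  imports Main "HOL-Computational_Algebra.Primes"
begin

definition diff_op :: "(int \<Rightarrow> 'a::ab_group_add) \<Rightarrow> (int \<Rightarrow> 'a)" where
  "diff_op f = (\<lambda>x. f (x + 1) - f x)"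

definition diff_iter :: "nat \<Rightarrow> (int \<Rightarrow> 'a::ab_group_add) \<Rightarrow> (int \<Rightarrow> 'a)" where
  "diff_iter k f = (diff_op ^^ k) f"

end

theory Submission
  imports Defs "HOL-Computational_Algebra.Polynomial"
begin

lemma fresh:
  fixes a b :: "'a::comm_ring_1"
  assumes "prime p"
  shows "\<exists>c. (a+b)^p = a^p + b^p + of_nat p * a * b * c"
proof -
  have p2: "p \<ge> 2" using assms prime_ge_2_nat by blast
  have split: "{..p} = insert 0 (insert p {1..<p})" using p2 by auto
  have "of_nat p * a * b dvd (\<Sum>k\<in>{1..<p}. of_nat (p choose k) * a^k * b^(p-k))"
  proof (rule dvd_sum)
    fix k assume k: "k \<in> {1..<p}"
    obtain m where m: "p choose k = p * m" using dvd_choose_prime[of k p] k assms by auto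
    have "a^k = a * a^(k-1)" using k by (cases k) auto
    moreover have "b^(p-k) = b * b^(p-k-1)" using k by (cases "p-k") auto
    ultimately have "of_nat (p choose k) * a^k * b^(p-k) = of_nat p * a * b * (of_nat m * a^(k-1) * b^(p-k-1))"
      by (simp add: m algebra_simps)
    then show "of_nat p * a * b dvd of_nat (p choose k) * a^k * b^(p-k)" by simp
  qed
  then obtain c where c: "(\<Sum>k\<in>{1..<p}. of_nat (p choose k) * a^k * b^(p-k)) = of_nat p * a * b * c"
    by (auto elim: dvdE)
  have "(a+b)^p = (\<Sum>k\<le>p. of_nat (p choose k) * a^k * b^(p-k))" by (rule binomial_ring)
  also have "\<dots> = b^p + (a^p + (\<Sum>k\<in>{1..<p}. of_nat (p choose k) * a^k * b^(p-k)))"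
    unfolding split using p2 by (simp add: sum.insert)
  finally show ?thesis using c by (auto simp: algebra_simps)
qed

lemma powD:
  fixes D M B :: "'a::comm_ring_1"
  assumes p2: "p \<ge> 2" and DB: "D^p = M + of_nat p * D * B"
  shows "\<exists>U V. D^(1 + k*(p-1)) = of_nat p ^ k * D * U + M * V"
proof (induction k)
  case 0
  show ?case by (rule exI[of _ 1], rule exI[of _ 0]) simp
next
  case (Suc k)
  then obtain U V where UV: "D^(1 + k*(p-1)) = of_nat p ^ k * D * U + M * V" by blast
  have e: "1 + Suc k * (p-1) = (1 + k*(p-1)) + (p-1)" by simp
  have dp: "D * D^(p-1) = D^p" using p2 by (cases p) auto
  have "D^(1 + Suc k*(p-1)) = D^(1+k*(p-1)) * D^(p-1)" by (metis e power_add)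
  also have "\<dots> = (of_nat p ^ k * D * U + M * V) * D^(p-1)" by (simp only: UV)
  also have "\<dots> = of_nat p ^ k * U * (D * D^(p-1)) + M * (V * D^(p-1))" by (simp add: algebra_simps)
  also have "\<dots> = of_nat p ^ Suc k * D * (U * B) + M * (of_nat p ^ k * U + V * D^(p-1))"
    unfolding dp DB by (simp add: algebra_simps)
  finally show ?case by blast
qed

lemma powD2:
  fixes D M B :: "'a::comm_ring_1"
  assumes p2: "p \<ge> 2" and DB: "D^p = M + of_nat p * D * B" and i: "i \<ge> 1"
  shows "\<exists>S T. D^i = of_nat p ^ ((i-1) div (p-1)) * S + M * T"
proof -
  define k where "k = (i-1) div (p-1)"
  define r where "r = (i-1) mod (p-1)"
  have ie: "i = (1 + k*(p-1)) + r" using i unfolding k_def r_def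
    using div_mult_mod_eq[of "i-1" "p-1"] by linarith
  obtain U V where UV: "D^(1 + k*(p-1)) = of_nat p ^ k * D * U + M * V"
    using powD[OF p2 DB] by blast
  have "D^i = D^(1+k*(p-1)) * D^r" by (simp only: ie power_add[of D "1+k*(p-1)" r, symmetric])
  also have "\<dots> = of_nat p ^ k * (D * U * D^r) + M * (V * D^r)"
    by (simp only: UV) (simp add: algebra_simps)
  finally have "D^i = of_nat p ^ k * (D * U * D^r) + M * (V * D^r)" .
  then show ?thesis unfolding k_def by blast
qed

lemma main_alg:
  fixes D M B A :: "'a::comm_ring_1"
  assumes p2: "p \<ge> 2" and DB: "D^p = M + of_nat p * D * B"
  shows "\<exists>S T. (of_nat p * A + D)^(\<beta>*(p-1)+1) = of_nat p ^ \<beta> * S + M * T"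
proof -
  define m where "m = \<beta>*(p-1)+1"
  have termk: "\<exists>S T. of_nat (m choose k) * (of_nat p * A)^k * D^(m-k) = of_nat p ^ \<beta> * S + M * T"
    if k: "k \<le> m" for k
  proof (cases "k = m")
    case True
    have "\<beta>*1 \<le> \<beta>*(p-1)" using p2 by (intro mult_le_mono2) simp
    then have b1: "\<beta> \<le> \<beta>*(p-1)" by (simp only: mult_1_right)
    then have bm: "\<beta> \<le> m" unfolding m_def by linarith
    have pm: "(of_nat p::'a) ^ m = of_nat p ^ \<beta> * of_nat p ^ (m-\<beta>)"
      using bm by (simp flip: power_add)
    have "of_nat (m choose k) * (of_nat p * A)^k * D^(m-k) = of_nat p ^ m * A^m"
      using True by (simp add: power_mult_distrib)
    also have "\<dots> = of_nat p ^ \<beta> * (of_nat p ^ (m-\<beta>) * A^m) + M * 0"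
      unfolding pm by (simp add: algebra_simps)
    finally have "of_nat (m choose k) * (of_nat p * A)^k * D^(m-k) = of_nat p ^ \<beta> * (of_nat p ^ (m-\<beta>) * A^m) + M * 0" .
    then show ?thesis by blast
  next
    case False
    then have mk: "m - k \<ge> 1" using k by simp
    obtain S T where ST: "D^(m-k) = of_nat p ^ ((m-k-1) div (p-1)) * S + M * T"
      using powD2[OF p2 DB mk] by blast
    define e where "e = (m-k-1) div (p-1)"
    have be: "\<beta> \<le> k + e"
    proof (cases "\<beta> \<le> k")
      case True then show ?thesis by simp
    next
      case False
      have "(\<beta>-k)*(p-1) = \<beta>*(p-1) - k*(p-1)" by (simp add: diff_mult_distrib)
      also have "\<dots> \<le> \<beta>*(p-1) - k"
      proof (intro diff_le_mono2)
        have "1 \<le> p-1" using p2 by simp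
        then have "k*1 \<le> k*(p-1)" by (rule mult_le_mono2)
        then show "k \<le> k*(p-1)" by simp
      qed
      also have "\<dots> = m-k-1" unfolding m_def by simp
      finally have "(\<beta>-k)*(p-1) div (p-1) \<le> (m-k-1) div (p-1)" by (rule div_le_mono)
      then have "\<beta>-k \<le> e" unfolding e_def using p2 by simp
      then show ?thesis by simp
    qed
    have "of_nat (m choose k) * (of_nat p * A)^k * D^(m-k)
        = of_nat p ^ \<beta> * (of_nat (m choose k) * of_nat p ^ (k+e-\<beta>) * A^k * S) + M * (of_nat (m choose k) * (of_nat p * A)^k * T)"
    proof -
      have pe: "(of_nat p::'a) ^ k * of_nat p ^ e = of_nat p ^ \<beta> * of_nat p ^ (k+e-\<beta>)"
        using be by (simp flip: power_add)
      have "of_nat (m choose k) * (of_nat p * A)^k * D^(m-k)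
          = of_nat (m choose k) * (of_nat p ^ k * of_nat p ^ e) * A^k * S + M * (of_nat (m choose k) * (of_nat p * A)^k * T)"
        unfolding ST e_def[symmetric] by (simp add: power_mult_distrib algebra_simps)
      then show ?thesis unfolding pe by (simp add: algebra_simps)
    qed
    then show ?thesis by blast
  qed
  then obtain S T where ST: "\<And>k. k \<le> m \<Longrightarrow> of_nat (m choose k) * (of_nat p * A)^k * D^(m-k) = of_nat p ^ \<beta> * S k + M * T k"
    by metis
  have "(of_nat p * A + D)^m = (\<Sum>k\<le>m. of_nat (m choose k) * (of_nat p * A)^k * D^(m-k))"
    by (rule binomial_ring)
  also have "\<dots> = (\<Sum>k\<le>m. of_nat p ^ \<beta> * S k + M * T k)" by (rule sum.cong) (auto simp: ST)
  also have "\<dots> = of_nat p ^ \<beta> * sum S {..m} + M * sum T {..m}"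
    by (simp add: sum.distrib sum_distrib_left)
  finally have eq: "(of_nat p * A + D)^m = of_nat p ^ \<beta> * sum S {..m} + M * sum T {..m}" .
  show ?thesis
    by (rule exI[of _ "sum S {..m}"], rule exI[of _ "sum T {..m}"]) (simp only: m_def[symmetric] eq)
qed


lemma pow_step:
  fixes x :: "'a::comm_ring_1"
  assumes pr: "prime p"
  shows "\<exists>A. (x - 1)^(p^k) = x^(p^k) - 1 + of_nat p * A"
proof (induction k)
  case 0
  show ?case by (rule exI[of _ 0]) simp
next
  case (Suc k)
  then obtain A where A: "(x - 1)^(p^k) = x^(p^k) - 1 + of_nat p * A" by blast
  have c3: "\<exists>c::'a. (-1)^p = -1 + of_nat p * c"
  proof (cases "even p")
    case True
    then have "\<not> p > 2" using prime_odd_nat[OF pr] by blast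
    then have "p = 2" using prime_ge_2_nat[OF pr] by linarith
    then show ?thesis by (intro exI[of _ 1]) simp
  next
    case False
    then show ?thesis by (intro exI[of _ 0]) simp
  qed
  then obtain c3 where c3: "(-1::'a)^p = -1 + of_nat p * c3" by blast
  obtain c1 where c1: "(x^(p^k) - 1 + of_nat p * A)^p = (x^(p^k) - 1)^p + (of_nat p * A)^p + of_nat p * (x^(p^k) - 1) * (of_nat p * A) * c1"
    using fresh[OF pr, of "x^(p^k) - 1" "of_nat p * A"] by blast
  obtain c2 where c2: "(x^(p^k) + (-1))^p = (x^(p^k))^p + (-1)^p + of_nat p * x^(p^k) * (-1) * c2"
    using fresh[OF pr, of "x^(p^k)" "-1"] by blast
  have pp: "p = Suc (p - 1)" using pr prime_gt_0_nat by simp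
  have ap: "(of_nat p * A)^p = of_nat p * (of_nat p ^ (p-1) * A^p)"
    by (subst (1) pp, subst (2) pp) (simp add: power_mult_distrib)
  have xs: "x^(p^Suc k) = (x^(p^k))^p" by (simp only: power_Suc2 power_mult)
  have "(x - 1)^(p^Suc k) = ((x-1)^(p^k))^p" by (simp only: power_Suc2 power_mult)
  also have "\<dots> = (x^(p^k) + (-1))^p + (of_nat p * A)^p + of_nat p * (x^(p^k) - 1) * (of_nat p * A) * c1"
    unfolding A c1 by simp
  also have "\<dots> = x^(p^Suc k) - 1 + of_nat p * (c3 + (of_nat p ^ (p-1) * A^p) - x^(p^k) * c2 + (x^(p^k) - 1) * (of_nat p * A) * c1)"
    unfolding c2 c3 ap xs by (simp add: algebra_simps)
  finally show ?case by blast
qed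

definition act :: "int poly \<Rightarrow> (int \<Rightarrow> int) \<Rightarrow> int \<Rightarrow> int" where
  "act P g x = (\<Sum>i\<le>degree P. coeff P i * g (x + int i))"

lemma act_bound: "degree P < n \<Longrightarrow> act P g x = (\<Sum>i<n. coeff P i * g (x + int i))"
  unfolding act_def
  by (rule sum.mono_neutral_left) (auto simp: coeff_eq_0)

lemma act_add: "act (P + Q) g x = act P g x + act Q g x"
proof -
  define n where "n = Suc (max (degree P) (degree Q))"
  have "degree (P+Q) < n" unfolding n_def using degree_add_le_max[of P Q] by simp
  moreover have "degree P < n" "degree Q < n" unfolding n_def by auto
  ultimately show ?thesis
    by (simp only: act_bound[where n=n]) (simp add: sum.distrib distrib_right)
qed

lemma act_smult: "act (smult a Q) g x = a * act Q g x"
proof -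
  have "degree (smult a Q) < Suc (degree Q)" using degree_smult_le[of a Q] by simp
  moreover have "degree Q < Suc (degree Q)" by simp
  ultimately show ?thesis
    by (simp only: act_bound[where n="Suc (degree Q)"]) (simp add: sum_distrib_left mult.assoc del: sum.lessThan_Suc)
qed

lemma act_zero [simp]: "act 0 g x = 0" by (simp add: act_def)

lemma act_pCons: "act (pCons a P) g x = a * g x + act P g (x + 1)"
proof -
  define n where "n = Suc (degree P)"
  have "degree (pCons a P) < Suc n" unfolding n_def using degree_pCons_le[of a P] by simp
  then have "act (pCons a P) g x = (\<Sum>i<Suc n. coeff (pCons a P) i * g (x + int i))" by (rule act_bound)
  also have "\<dots> = a * g x + (\<Sum>i<n. coeff P i * g (x + 1 + int i))"
    by (subst sum.lessThan_Suc_shift) (simp add: add_ac)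
  also have "\<dots> = a * g x + act P g (x + 1)" using act_bound[of P n] unfolding n_def by simp
  finally show ?thesis .
qed

lemma act_mult: "act (P * Q) g x = act P (act Q g) x"
proof (induction P arbitrary: x)
  case 0
  then show ?case by simp
next
  case (pCons a P)
  have "act (pCons a P * Q) g x = a * act Q g x + act (pCons 0 (P * Q)) g x"
    by (simp add: act_add act_smult)
  also have "\<dots> = a * act Q g x + act P (act Q g) (x + 1)" by (simp add: act_pCons pCons.IH)
  finally show ?case by (simp add: act_pCons)
qed

lemma act_zero_fun: "act P (\<lambda>_. 0) x = 0" by (simp add: act_def)

lemma act_const: "act [:c:] g x = c * g x" by (simp add: act_pCons)

lemma act_one: "act 1 g x = g x" by (simp add: act_const one_pCons)

lemma act_X: "act [:0,1:] g x = g (x + 1)" by (simp add: act_pCons)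

lemma act_powX: "act ([:0,1:]^n) g x = g (x + int n)"
proof (induction n arbitrary: x)
  case 0 then show ?case by (simp add: act_one)
next
  case (Suc n)
  have "act ([:0,1:]^Suc n) g x = act ([:0,1:]^n) g (x + 1)"
    by (simp only: power_Suc act_mult act_X)
  then show ?case by (simp add: Suc add_ac)
qed

lemma act_minus: "act (P - Q) g x = act P g x - act Q g x"
proof -
  have "act (P - Q) g x + act Q g x = act P g x" by (metis act_add diff_add_cancel)
  then show ?thesis by simp
qed

lemma diff_iter_act: "diff_iter k f = act ([:-1,1:]^k) f"
proof (induction k)
  case 0
  then show ?case by (simp add: diff_iter_def act_one fun_eq_iff)
next
  case (Suc k)
  have "diff_iter (Suc k) f = diff_op (diff_iter k f)" by (simp add: diff_iter_def)
  moreover have "act ([:-1,1:]^Suc k) f x = act ([:-1,1:]^k) f (x+1) - act ([:-1,1:]^k) f x" for x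
    by (simp only: power_Suc act_mult) (simp add: act_pCons)
  ultimately show ?case by (simp add: Suc diff_op_def fun_eq_iff)
qed

theorem theorem3p4:
  fixes p \<alpha> \<beta> :: nat and f :: "int \<Rightarrow> int"
  assumes "prime p" and "\<alpha> \<ge> 1"
    and "\<And>x. f (x + int (p ^ \<alpha>)) = f x"
  shows "\<forall>x. int (p ^ \<beta>) dvd diff_iter ((\<beta> * (p - 1) + 1) * p ^ (\<alpha> - 1)) f x"
proof
  fix x
  have p2: "p \<ge> 2" using assms(1) prime_ge_2_nat by blast
  define q where "q = p ^ (\<alpha> - 1)"
  define N where "N = q * p"
  have Np: "N = p ^ \<alpha>" unfolding N_def q_def using assms(2)
    by (cases \<alpha>) (simp_all add: power_Suc2)
  define X :: "int poly" where "X = [:0,1:]"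
  define D where "D = X^q - 1"
  define M where "M = X^N - 1"
  obtain c where c: "(D + 1)^p = D^p + 1^p + of_nat p * D * 1 * c"
    using fresh[OF assms(1), of D 1] by blast
  have "(D + 1)^p = X^N" unfolding D_def N_def by (simp add: power_mult)
  then have DB: "D^p = M + of_nat p * D * (- c)" using c unfolding M_def by (simp add: algebra_simps)
  obtain A where A: "(X - 1)^q = X^q - 1 + of_nat p * A"
    using pow_step[OF assms(1), of X "\<alpha> - 1"] unfolding q_def by blast
  have X1: "[:-1,1:] = X - 1" unfolding X_def
    by (rule poly_eqI) (simp add: coeff_pCons split: nat.split)
  obtain S T where ST: "(of_nat p * A + D)^(\<beta>*(p-1)+1) = of_nat p ^ \<beta> * S + M * T"
    using main_alg[OF p2 DB] by blast
  have A': "(X - 1)^q = of_nat p * A + D" unfolding A D_def by simp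
  have "[:-1,1:] ^ ((\<beta> * (p - 1) + 1) * q) = ((X-1)^q)^(\<beta> * (p - 1) + 1)"
    unfolding X1 mult.commute[of "\<beta> * (p - 1) + 1" q] power_mult ..
  also have "\<dots> = of_nat p ^ \<beta> * S + T * M" unfolding A' ST by (simp only: mult.commute[of M T])
  also have "(of_nat p::int poly) ^ \<beta> = [:int (p ^ \<beta>):]"
    unfolding of_nat_power[symmetric] by (rule of_nat_poly)
  finally have eq: "[:-1,1:] ^ ((\<beta> * (p - 1) + 1) * q) = [:int (p ^ \<beta>):] * S + T * M" .
  have Mf: "act M f = (\<lambda>_. 0)"
  proof
    fix y
    have "act M f y = f (y + int N) - f y"
      unfolding M_def X_def by (simp only: act_minus act_one act_powX)
    also have "\<dots> = 0" unfolding Np assms(3) by simp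
    finally show "act M f y = 0" .
  qed
  have "diff_iter ((\<beta> * (p - 1) + 1) * q) f x = int (p ^ \<beta>) * act S f x"
    unfolding diff_iter_act eq by (simp add: act_add act_mult act_const act_smult Mf act_zero_fun)
  then show "int (p ^ \<beta>) dvd diff_iter ((\<beta> * (p - 1) + 1) * p ^ (\<alpha> - 1)) f x"
    unfolding q_def by simp
qed

end
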